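(* Let $p,q\in\mathbb{N}$ be co-prime with $p/q\in[0,1]$. For $n\ge2$ let $Z_n=\{z\in B^n:\ p\sum_{i=1}^n\alpha_i2^{-i}-q\sum_{i=1}^n\beta_i2^{-i}=0\}$, where $z_i=(\alpha_i,\beta_i)$. Then $$\log\frac{\mathcal{N}_n(D,D')}{\mathcal{N}_{n-1}(D,D')}\le\sum_{x\in Z_n}\sup_{y\in[x]}\phi(y).$$
   Context: $D=\{0,1,p/q\}$, $D'=\{\frac{x+i}{2}:i\in D\}$, and $\mathcal{N}_n(D,D')$ is the number of pairs $(a,b)\in D^n\times D^n$ with $\sum_{i=1}^na_i2^{-i}=\sum_{i=1}^nb_i2^{-i}$ (equivalently $F_a=F_b$ where $F_a=F_{a_1}\circ\cdots\circ F_{a_n}$, $F_i(x)=\frac{x+i}2$). $B=\{(0,0),(1,0),(0,1),(1,1)\}$, ordered this way to index rows/columns $1,\dots,4$; for $x\in B^n$, $[x]=\{\omega\in B^{\mathbb{N}}:\omega_1\cdots\omega_n=x\}$. The matrices are $A_{(0,0)}=\begin{pmatrix}3&1&1&1\\0&1&0&0\\0&0&1&0\\0&0&0&1\end{pmatrix}$, $A_{(1,0)}=\begin{pmatrix}1&0&1&0\\1&3&0&1\\0&0&0&0\\0&0&1&1\end{pmatrix}$, $A_{(0,1)}=\begin{pmatrix}1&1&0&0\\0&0&0&0\\1&0&3&1\\0&1&0&1\end{pmatrix}$, $A_{(1,1)}=\begin{pmatrix}1&0&0&0\\0&1&0&0\\0&0&1&0\\1&1&1&3\end{pmatrix}$,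 and for $z\in B^{\mathbb{N}}$, $$\phi(z)=\limsup_{n\to\infty}\log\frac{(1,1,1,1)A_{z_1}A_{z_2}\cdots A_{z_n}(1,0,0,0)^T}{(1,1,1,1)A_{z_2}A_{z_3}\cdots A_{z_n}(1,0,0,0)^T}.$$ *)

theory Defs
  imports "HOL-Analysis.Analysis"
begin

definition digitD :: "nat \<Rightarrow> nat \<Rightarrow> real set" where
  "digitD p q = {0, 1, real p / real q}"

text \<open>N_n(D,D'): number of pairs (a,b) in D^n x D^n with equal dyadic sums
  sum_{i=1}^n a_i 2^{-i} = sum_{i=1}^n b_i 2^{-i}.  Words are lists, a!i = a_{i+1}.\<close>
definition dyadic_sum :: "real list \<Rightarrow> real" where
  "dyadic_sum a = (\<Sum>i<length a. a ! i / 2 ^ (i + 1))"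

definition countN :: "nat \<Rightarrow> nat \<Rightarrow> nat \<Rightarrow> nat" where
  "countN p q n = card {(a, b). length a = n \<and> set a \<subseteq> digitD p q \<and>
                               length b = n \<and> set b \<subseteq> digitD p q \<and>
                               dyadic_sum a = dyadic_sum b}"

text \<open>Alphabet B = {(0,0),(1,0),(0,1),(1,1)}; matrix indices 1..4 are 0..3 here.\<close>
definition alphB :: "(nat \<times> nat) set" where
  "alphB = {(0,0), (1,0), (0,1), (1,1)}"

definition Amat :: "nat \<times> nat \<Rightarrow> nat \<Rightarrow> nat \<Rightarrow> real" where
  "Amat z i j =
     (if z = (0,0) then [[3,1,1,1],[0,1,0,0],[0,0,1,0],[0,0,0,1]] ! i ! j
      else if z = (1,0) then [[1,0,1,0],[1,3,0,1],[0,0,0,0],[0,0,1,1]] ! i ! j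
      else if z = (0,1) then [[1,1,0,0],[0,0,0,0],[1,0,3,1],[0,1,0,1]] ! i ! j
      else if z = (1,1) then [[1,0,0,0],[0,1,0,0],[0,0,1,0],[1,1,1,3]] ! i ! j
      else 0)"

definition vecmat :: "(nat \<Rightarrow> real) \<Rightarrow> (nat \<Rightarrow> nat \<Rightarrow> real) \<Rightarrow> nat \<Rightarrow> real" where
  "vecmat v M = (\<lambda>j. \<Sum>i<4. v i * M i j)"

definition word_val :: "(nat \<times> nat) list \<Rightarrow> real" where
  "word_val ws = foldl (\<lambda>v a. vecmat v (Amat a)) (\<lambda>_. 1) ws 0"

text \<open>phi(z) for z in B^N (z 0 = z_1), as an extended real limsup.\<close>
definition phi :: "(nat \<Rightarrow> nat \<times> nat) \<Rightarrow> ereal" where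
  "phi z = limsup (\<lambda>n. ereal (ln (word_val (map z [0..<n]) / word_val (map z [1..<n]))))"

definition cyl :: "(nat \<times> nat) list \<Rightarrow> (nat \<Rightarrow> nat \<times> nat) set" where
  "cyl x = {\<omega>. (\<forall>k. \<omega> k \<in> alphB) \<and> (\<forall>i<length x. \<omega> i = x ! i)}"

definition Zset :: "nat \<Rightarrow> nat \<Rightarrow> nat \<Rightarrow> (nat \<times> nat) list set" where
  "Zset p q n = {z. length z = n \<and> set z \<subseteq> alphB \<and>
      real p * (\<Sum>i<n. real (fst (z ! i)) / 2 ^ (i + 1))
      - real q * (\<Sum>i<n. real (snd (z ! i)) / 2 ^ (i + 1)) = 0}"

end

theory Submission
  imports Defs
begin


definition FW :: "(nat \<Rightarrow> real) \<Rightarrow> (nat \<times> nat) list \<Rightarrow> nat \<Rightarrow> real" where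
  "FW u ws = foldl (\<lambda>v a. vecmat v (Amat a)) u ws"

lemma lt4: "(i::nat) < 4 \<Longrightarrow> i = 0 \<or> i = 1 \<or> i = 2 \<or> i = 3" by auto

lemma Amat_nonneg: "i < 4 \<Longrightarrow> j < 4 \<Longrightarrow> 0 \<le> Amat z i j"
  using lt4[of i] lt4[of j] by (auto simp: Amat_def)

lemma sum4: "(\<Sum>i<4. f i) = f 0 + f 1 + f 2 + (f 3 :: real)" for f :: "nat \<Rightarrow> real"
  by (simp add: eval_nat_numeral)

lemma colsum: "z \<in> alphB \<Longrightarrow> j < 4 \<Longrightarrow> 2 \<le> vecmat (\<lambda>_. 1) (Amat z) j \<and> vecmat (\<lambda>_. 1) (Amat z) j \<le> 3"
  using lt4[of j] by (auto simp: vecmat_def sum4 Amat_def alphB_def)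

lemma FW_Cons: "FW u (a # ws) = FW (vecmat u (Amat a)) ws"
  by (simp add: FW_def)

lemma word_val_FW: "word_val ws = FW (\<lambda>_. 1) ws 0"
  by (simp add: word_val_def FW_def)

lemma FW_scale: "(\<forall>i<4. c * u i \<le> v i) \<Longrightarrow> j < 4 \<Longrightarrow> c * FW u ws j \<le> FW v ws j"
proof (induction ws arbitrary: u v)
  case Nil thus ?case by (simp add: FW_def)
next
  case (Cons a ws)
  have "\<forall>i<4. c * vecmat u (Amat a) i \<le> vecmat v (Amat a) i"
  proof (intro allI impI)
    fix i :: nat assume i: "i < 4"
    have "c * vecmat u (Amat a) i = (\<Sum>k<4. (c * u k) * Amat a k i)"
      by (simp add: vecmat_def sum_distrib_left mult.assoc)
    also have "\<dots> \<le> (\<Sum>k<4. v k * Amat a k i)"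
      by (rule sum_mono, rule mult_right_mono) (use Cons.prems Amat_nonneg i in auto)
    finally show "c * vecmat u (Amat a) i \<le> vecmat v (Amat a) i" by (simp add: vecmat_def)
  qed
  then show ?case using Cons by (simp add: FW_Cons)
qed

lemma FW_pos: "(\<forall>i<4. 1 \<le> u i) \<Longrightarrow> set ws \<subseteq> alphB \<Longrightarrow> j < 4 \<Longrightarrow> 1 \<le> FW u ws j"
proof (induction ws arbitrary: u)
  case Nil thus ?case by (simp add: FW_def)
next
  case (Cons a ws)
  have "\<forall>i<4. 1 \<le> vecmat u (Amat a) i"
  proof (intro allI impI)
    fix i :: nat assume i: "i < 4"
    have "1 \<le> vecmat (\<lambda>_. 1) (Amat a) i" using colsum[of a i] Cons.prems i by auto
    also have "\<dots> \<le> vecmat u (Amat a) i" unfolding vecmat_def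
    proof (rule sum_mono)
      fix k :: nat assume k: "k \<in> {..<4}"
      have "1 * Amat a k i \<le> u k * Amat a k i"
        by (rule mult_right_mono) (use Cons.prems Amat_nonneg i k in auto)
      thus "1 * Amat a k i \<le> u k * Amat a k i" .
    qed
    finally show "1 \<le> vecmat u (Amat a) i" .
  qed
  then show ?case using Cons by (simp add: FW_Cons)
qed

lemma wv_pos: "set ws \<subseteq> alphB \<Longrightarrow> 1 \<le> word_val ws"
  using FW_pos[of "\<lambda>_. 1" ws 0] by (simp add: word_val_FW)

lemma wv_Cons: "a \<in> alphB \<Longrightarrow> 2 * word_val ws \<le> word_val (a # ws)"
  unfolding word_val_FW FW_Cons
  by (rule FW_scale) (use colsum[of a] in auto)

lemma FW_zero: "FW u (replicate k (0,0)) 0 = 3 ^ k * u 0"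
proof (induction k arbitrary: u)
  case 0 thus ?case by (simp add: FW_def)
next
  case (Suc k)
  have "vecmat u (Amat (0,0)) 0 = 3 * u 0" by (simp add: vecmat_def sum4 Amat_def)
  then show ?case using Suc by (simp add: FW_Cons)
qed

lemma phi_ge2: assumes y: "\<forall>k. y k \<in> alphB" shows "ereal (ln 2) \<le> phi y"
  unfolding phi_def
proof (rule le_Limsup)
  show "\<forall>\<^sub>F n in sequentially. ereal (ln 2) \<le> ereal (ln (word_val (map y [0..<n]) / word_val (map y [1..<n])))"
    using eventually_ge_at_top[of 1]
  proof eventually_elim
    case (elim n)
    have e: "map y [0..<n] = y 0 # map y [1..<n]" using elim by (simp add: upt_conv_Cons)
    have s: "set (map y [1..<n]) \<subseteq> alphB" using y by auto
    have p: "1 \<le> word_val (map y [1..<n])" using wv_pos[OF s] .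
    have "2 * word_val (map y [1..<n]) \<le> word_val (map y [0..<n])" unfolding e using wv_Cons y by auto
    hence "2 \<le> word_val (map y [0..<n]) / word_val (map y [1..<n])" using p by (simp add: field_simps)
    thus ?case by simp
  qed
qed simp

lemma phi_zero: "ereal (ln 3) \<le> phi (\<lambda>_. (0,0))"
  unfolding phi_def
proof (rule le_Limsup)
  show "\<forall>\<^sub>F n in sequentially. ereal (ln 3) \<le> ereal (ln (word_val (map (\<lambda>_. (0,0)) [0..<n]) / word_val (map (\<lambda>_. (0,0)) [1..<n])))"
    using eventually_ge_at_top[of 1]
  proof eventually_elim
    case (elim n)
    have a: "map (\<lambda>_. (0::nat,0::nat)) [0..<n] = replicate n (0,0)" by (simp add: map_replicate_const)
    have b: "map (\<lambda>_. (0::nat,0::nat)) [1..<n] = replicate (n-1) (0,0)" by (simp add: map_replicate_const)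
    have "(3::real) ^ n / 3 ^ (n - 1) = 3" using elim by (cases n) auto
    thus ?case unfolding a b word_val_FW FW_zero by simp
  qed
qed simp



definition W :: "nat \<Rightarrow> nat \<Rightarrow> nat \<Rightarrow> real list set" where
  "W p q m = {a. length a = m \<and> set a \<subseteq> digitD p q}"

definition Pc :: "nat \<Rightarrow> nat \<Rightarrow> nat \<Rightarrow> real \<Rightarrow> nat" where
  "Pc p q m d = card {(a,b). a \<in> W p q m \<and> b \<in> W p q m \<and> dyadic_sum a - dyadic_sum b = d}"

lemma finite_D: "finite (digitD p q)" by (simp add: digitD_def)

lemma finite_W: "finite (W p q m)"
proof -
  have "W p q m = {xs. set xs \<subseteq> digitD p q \<and> length xs = m}" by (auto simp: W_def)
  thus ?thesis using finite_lists_length_eq[OF finite_D] by simp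
qed

lemma dyadic_sum_snoc: "dyadic_sum (a @ [x]) = dyadic_sum a + x / 2 ^ (length a + 1)"
  by (simp add: dyadic_sum_def nth_append)

lemma dyadic_sum_Cons: "dyadic_sum (x # a) = x / 2 + dyadic_sum a / 2"
  unfolding dyadic_sum_def length_Cons sum.lessThan_Suc_shift
  by (simp add: sum_divide_distrib power_commutes del: sum.lessThan_Suc)

lemma countN_Pc: "countN p q m = Pc p q m 0"
  unfolding countN_def Pc_def W_def by (rule arg_cong[where f=card]) auto

lemma decomp:
  assumes "set a \<subseteq> digitD p q" "q > 0"
  shows "\<exists>U V. (U::nat) < 2 ^ length a \<and> (V::nat) < 2 ^ length a \<and>
           real q * 2 ^ length a * dyadic_sum a = real q * real U + real p * real V"
  using assms(1)
proof (induction a)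
  case Nil show ?case by (intro exI[of _ 0]) (simp add: dyadic_sum_def)
next
  case (Cons x a)
  then obtain U :: nat and V :: nat where UV: "U < 2 ^ length a" "V < 2 ^ length a"
      "real q * 2 ^ length a * dyadic_sum a = real q * real U + real p * real V" by auto
  have e: "real q * 2 ^ length (x # a) * dyadic_sum (x # a) = real q * 2 ^ length a * x + (real q * U + real p * V)"
    using UV(3) by (simp add: dyadic_sum_Cons algebra_simps)
  have x: "x = 0 \<or> x = 1 \<or> x = real p / real q" using Cons.prems by (auto simp: digitD_def)
  show ?case
  proof -
    { assume "x = 0"
      hence ?thesis using UV e by (intro exI[of _ U] exI[of _ V]) (auto simp: dyadic_sum_Cons) }
    moreover
    { assume "x = 1"
      hence ?thesis using UV e by (intro exI[of _ "2 ^ length a + U"] exI[of _ V]) (auto simp: algebra_simps) }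
    moreover
    { assume "x = real p / real q"
      hence "real q * 2 ^ length a * x = real p * 2 ^ length a" using assms(2) by simp
      hence ?thesis using UV e by (intro exI[of _ U] exI[of _ "2 ^ length a + V"]) (auto simp: algebra_simps) }
    ultimately show ?thesis using x by blast
  qed
qed

lemma amgm_nat: "2 * (a * b) \<le> a * a + b * (b::nat)"
proof -
  have "0 \<le> (real a - real b)^2" by simp
  hence "real (2 * (a * b)) \<le> real (a * a + b * b)" by (simp add: power2_eq_square algebra_simps)
  thus ?thesis by linarith
qed

lemma CS_count:
  fixes S :: "'a \<Rightarrow> real"
  assumes A: "finite A"
  shows "card {(a,b). a \<in> A \<and> b \<in> A \<and> S a - S b = d} \<le> card {(a,b). a \<in> A \<and> b \<in> A \<and> S a - S b = 0}"
proof -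
  define f where "f t = card {a \<in> A. S a = t}" for t
  define T where "T = S ` A"
  have fT: "finite T" using A by (simp add: T_def)
  have f0: "f s = 0" if "s \<notin> T" for s
  proof -
    have "{a \<in> A. S a = s} = {}" using that by (auto simp: T_def)
    thus ?thesis unfolding f_def by (simp only: card.empty)
  qed
  have key: "card {(a,b). a \<in> A \<and> b \<in> A \<and> S a - S b = e} = (\<Sum>t\<in>T. f t * f (t - e))" for e
  proof -
    have "{(a,b). a \<in> A \<and> b \<in> A \<and> S a - S b = e} = Sigma A (\<lambda>a. {b \<in> A. S b = S a - e})" by auto
    hence "card {(a,b). a \<in> A \<and> b \<in> A \<and> S a - S b = e} = (\<Sum>a\<in>A. f (S a - e))"
      using A by (simp add: card_SigmaI f_def)
    also have "\<dots> = (\<Sum>t\<in>T. \<Sum>a\<in>{x\<in>A. S x = t}. f (S a - e))"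
      unfolding T_def by (rule sum.image_gen[OF A])
    also have "\<dots> = (\<Sum>t\<in>T. f t * f (t - e))"
      by (rule sum.cong) (auto simp: f_def)
    finally show ?thesis .
  qed
  have inj: "inj_on (\<lambda>t. t - d) T" by (auto simp: inj_on_def)
  have "(\<Sum>t\<in>T. f (t - d) * f (t - d)) = (\<Sum>s\<in>(\<lambda>t. t - d) ` T. f s * f s)"
    by (simp add: sum.reindex[OF inj])
  also have "\<dots> = (\<Sum>s\<in>((\<lambda>t. t - d) ` T) \<inter> T. f s * f s)"
    by (rule sum.mono_neutral_right) (use fT f0 in auto)
  also have "\<dots> \<le> (\<Sum>s\<in>T. f s * f s)"
    by (rule sum_mono2) (use fT in auto)
  finally have sq: "(\<Sum>t\<in>T. f (t - d) * f (t - d)) \<le> (\<Sum>s\<in>T. f s * f s)" .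
  have "2 * (\<Sum>t\<in>T. f t * f (t - d)) = (\<Sum>t\<in>T. 2 * (f t * f (t - d)))" by (simp add: sum_distrib_left)
  also have "\<dots> \<le> (\<Sum>t\<in>T. f t * f t + f (t - d) * f (t - d))"
    by (rule sum_mono) (rule amgm_nat)
  also have "\<dots> \<le> 2 * (\<Sum>s\<in>T. f s * f s)" using sq by (simp add: sum.distrib)
  finally have "(\<Sum>t\<in>T. f t * f (t - d)) \<le> (\<Sum>s\<in>T. f s * f s)" by simp
  thus ?thesis using key[of d] key[of 0] by simp
qed

lemma Pc_le: "Pc p q m d \<le> Pc p q m 0"
  unfolding Pc_def by (rule CS_count[OF finite_W])

lemma countN_step:
  "countN p q (Suc m) = (\<Sum>x\<in>digitD p q. \<Sum>y\<in>digitD p q. Pc p q m ((y - x) / 2 ^ Suc m))"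
proof -
  define D where "D = digitD p q"
  define G where "G = Sigma (D \<times> D) (\<lambda>(x,y). {(a,b). a \<in> W p q m \<and> b \<in> W p q m \<and> dyadic_sum a - dyadic_sum b = (y - x) / 2 ^ Suc m})"
  define h where "h = (\<lambda>((x::real,y::real),(a,b)). (a @ [x], b @ [y]))"
  have E: "{(a, b). length a = Suc m \<and> set a \<subseteq> D \<and> length b = Suc m \<and> set b \<subseteq> D \<and> dyadic_sum a = dyadic_sum b} = h ` G"
  proof (intro equalityI subsetI)
    fix z assume z: "z \<in> {(a, b). length a = Suc m \<and> set a \<subseteq> D \<and> length b = Suc m \<and> set b \<subseteq> D \<and> dyadic_sum a = dyadic_sum b}"
    then obtain a b where ab: "z = (a,b)" "length a = Suc m" "set a \<subseteq> D" "length b = Suc m" "set b \<subseteq> D" "dyadic_sum a = dyadic_sum b" by auto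
    obtain a' x where a': "a = a' @ [x]" using ab(2) by (cases a rule: rev_cases) auto
    obtain b' y where b': "b = b' @ [y]" using ab(4) by (cases b rule: rev_cases) auto
    have "dyadic_sum a' + x / 2 ^ Suc m = dyadic_sum b' + y / 2 ^ Suc m"
      using ab(6) ab(2,4) unfolding a' b' dyadic_sum_snoc by simp
    hence "dyadic_sum a' - dyadic_sum b' = (y - x) / 2 ^ Suc m" by (simp add: field_simps)
    hence "((x,y),(a',b')) \<in> G" using ab a' b' by (auto simp: G_def W_def D_def)
    moreover have "z = h ((x,y),(a',b'))" using ab a' b' by (simp add: h_def)
    ultimately show "z \<in> h ` G" by blast
  next
    fix z assume "z \<in> h ` G"
    then obtain x y a' b' where g: "((x,y),(a',b')) \<in> G" "z = (a' @ [x], b' @ [y])" by (auto simp: h_def)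
    hence g2: "x \<in> D" "y \<in> D" "a' \<in> W p q m" "b' \<in> W p q m" "dyadic_sum a' - dyadic_sum b' = (y - x) / 2 ^ Suc m"
      by (auto simp: G_def)
    have "dyadic_sum (a' @ [x]) = dyadic_sum (b' @ [y])"
      using g2 unfolding dyadic_sum_snoc by (auto simp: W_def field_simps)
    thus "z \<in> {(a, b). length a = Suc m \<and> set a \<subseteq> D \<and> length b = Suc m \<and> set b \<subseteq> D \<and> dyadic_sum a = dyadic_sum b}"
      using g g2 by (auto simp: W_def D_def)
  qed
  have inj: "inj_on h G" by (auto simp: inj_on_def h_def)
  have fin: "finite {(a,b). a \<in> W p q m \<and> b \<in> W p q m \<and> P a b}" for P
    by (rule finite_subset[of _ "W p q m \<times> W p q m"]) (use finite_W in auto)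
  have "countN p q (Suc m) = card (h ` G)" unfolding countN_def E[unfolded D_def] ..
  also have "\<dots> = card G" by (rule card_image[OF inj])
  also have "\<dots> = (\<Sum>(x,y)\<in>D \<times> D. Pc p q m ((y - x) / 2 ^ Suc m))"
    unfolding G_def using finite_D fin by (subst card_SigmaI) (auto simp: D_def Pc_def split_def)
  also have "\<dots> = (\<Sum>x\<in>D. \<Sum>y\<in>D. Pc p q m ((y - x) / 2 ^ Suc m))"
    by (simp add: sum.cartesian_product)
  finally show ?thesis by (simp add: D_def)
qed



lemma H: "(Q::int) > 0 \<Longrightarrow> Q dvd X \<Longrightarrow> X \<noteq> 0 \<Longrightarrow> \<bar>X\<bar> < 2 * Q \<Longrightarrow> X = Q \<or> X = - Q"
proof -
  assume a: "Q > 0" "Q dvd X" "X \<noteq> 0" "\<bar>X\<bar> < 2 * Q"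
  then obtain k where k: "X = Q * k" by (auto simp: dvd_def)
  have "k \<noteq> 0" using a k by auto
  moreover have "\<bar>k\<bar> < 2" using a k by (auto simp: abs_mult)
  ultimately have "k = 1 \<or> k = -1" by auto
  thus ?thesis using k by auto
qed

lemma caseA:
  fixes P Q K M N s :: int
  assumes cop: "coprime P Q" and Q: "Q > 0" and K: "\<bar>K\<bar> < N" and M: "\<bar>M\<bar> < N"
    and e: "2 * (Q * K + P * M) = s * Q" and s: "s = 1 \<or> s = -1"
  shows "Q < 2 * N \<and> (2 * N \<le> 2 * Q \<longrightarrow> even Q)"
proof -
  have "P * (2 * M) = Q * (s - 2 * K)" using e by (simp add: algebra_simps)
  hence "Q dvd P * (2 * M)" by simp
  hence d: "Q dvd 2 * M" using cop by (simp add: coprime_commute coprime_dvd_mult_right_iff)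
  have nz: "2 * M \<noteq> 0"
  proof
    assume "2 * M = 0"
    hence "Q * (2 * K) = Q * s" using e by (simp add: algebra_simps)
    hence "2 * K = s" using Q by simp
    thus False using s by presburger
  qed
  have "Q \<le> \<bar>2 * M\<bar>" using dvd_imp_le_int[OF nz d] Q by simp
  hence 1: "Q < 2 * N" using M by linarith
  have "2 * N \<le> 2 * Q \<longrightarrow> even Q"
  proof
    assume "2 * N \<le> 2 * Q"
    hence "\<bar>2 * M\<bar> < 2 * Q" using M by linarith
    hence "2 * M = Q \<or> 2 * M = - Q" using H[OF Q d nz] by simp
    thus "even Q" by presburger
  qed
  thus ?thesis using 1 by simp
qed

lemma caseB:
  fixes P Q K M N s :: int
  assumes cop: "coprime P Q" and Q: "Q > 0" and K: "\<bar>K\<bar> < N" and M: "\<bar>M\<bar> < N"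
    and e: "2 * (Q * K + P * M) = s * P" and s: "s = 1 \<or> s = -1"
  shows "Q < 2 * N \<and> (2 * N \<le> 2 * Q \<longrightarrow> odd Q \<and> even P)"
proof -
  have pe: "P * (2 * M - s) = Q * (- 2 * K)" using e by (simp add: algebra_simps)
  hence "Q dvd P * (2 * M - s)" by simp
  hence d: "Q dvd 2 * M - s" using cop by (simp add: coprime_commute coprime_dvd_mult_right_iff)
  have nz: "2 * M - s \<noteq> 0" using s by presburger
  have "Q \<le> \<bar>2 * M - s\<bar>" using dvd_imp_le_int[OF nz d] Q by simp
  hence 1: "Q < 2 * N" using M s by linarith
  have "2 * N \<le> 2 * Q \<longrightarrow> odd Q \<and> even P"
  proof
    assume "2 * N \<le> 2 * Q"
    hence "\<bar>2 * M - s\<bar> < 2 * Q" using M s by linarith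
    hence h: "2 * M - s = Q \<or> 2 * M - s = - Q" using H[OF Q d nz] by simp
    hence oq: "odd Q" using s by presburger
    have "P * Q = Q * (- 2 * K) \<or> P * (- Q) = Q * (- 2 * K)"
    proof (rule disjE[OF h])
      assume "2 * M - s = Q" thus ?thesis using pe by (intro disjI1) (simp only:)
    next
      assume "2 * M - s = - Q" thus ?thesis using pe by (intro disjI2) (simp only:)
    qed
    hence "Q * P = Q * (- 2 * K) \<or> Q * P = Q * (2 * K)" by (auto simp: algebra_simps)
    hence "P = - 2 * K \<or> P = 2 * K" using Q by (simp only: mult_cancel_left) simp
    hence "even P" by presburger
    thus "odd Q \<and> even P" using oq by simp
  qed
  thus ?thesis using 1 by simp
qed

lemma caseC:
  fixes P Q K M N s :: int
  assumes cop: "coprime P Q" and Q: "Q > 0" and K: "\<bar>K\<bar> < N" and M: "\<bar>M\<bar> < N"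
    and e: "2 * (Q * K + P * M) = s * (Q - P)" and s: "s = 1 \<or> s = -1"
  shows "Q < 2 * N \<and> (2 * N \<le> 2 * Q \<longrightarrow> odd Q \<and> odd P)"
proof -
  have pe: "P * (2 * M + s) = Q * (s - 2 * K)" using e by (simp add: algebra_simps)
  hence "Q dvd P * (2 * M + s)" by simp
  hence d: "Q dvd 2 * M + s" using cop by (simp add: coprime_commute coprime_dvd_mult_right_iff)
  have nz: "2 * M + s \<noteq> 0" using s by presburger
  have "Q \<le> \<bar>2 * M + s\<bar>" using dvd_imp_le_int[OF nz d] Q by simp
  hence 1: "Q < 2 * N" using M s by linarith
  have "2 * N \<le> 2 * Q \<longrightarrow> odd Q \<and> odd P"
  proof
    assume "2 * N \<le> 2 * Q"
    hence "\<bar>2 * M + s\<bar> < 2 * Q" using M s by linarith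
    hence h: "2 * M + s = Q \<or> 2 * M + s = - Q" using H[OF Q d nz] by simp
    hence oq: "odd Q" using s by presburger
    have "P * Q = Q * (s - 2 * K) \<or> P * (- Q) = Q * (s - 2 * K)"
    proof (rule disjE[OF h])
      assume "2 * M + s = Q" thus ?thesis using pe by (intro disjI1) (simp only:)
    next
      assume "2 * M + s = - Q" thus ?thesis using pe by (intro disjI2) (simp only:)
    qed
    hence "Q * P = Q * (s - 2 * K) \<or> Q * (- P) = Q * (s - 2 * K)" by (auto simp: algebra_simps)
    hence "s - 2 * K = P \<or> s - 2 * K = - P" using Q by (simp only: mult_cancel_left) auto
    hence "odd P" using s by presburger
    thus "odd Q \<and> odd P" using oq by simp
  qed
  thus ?thesis using 1 by simp
qed



definition dd :: "nat \<Rightarrow> nat \<Rightarrow> nat \<Rightarrow> real" where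
  "dd p q i = (if i = 0 then 0 else if i = 1 then 1 else real p / real q)"

definition EE :: "nat \<Rightarrow> nat \<Rightarrow> nat \<Rightarrow> int" where
  "EE p q i = (if i = 0 then 0 else if i = 1 then int q else int p)"

lemma D_img: "digitD p q = dd p q ` {..<3}"
proof -
  have "{..<3::nat} = {0,1,2}" by auto
  thus ?thesis by (auto simp: digitD_def dd_def)
qed

lemma qdd: "q > 0 \<Longrightarrow> real q * dd p q i = real_of_int (EE p q i)"
  by (simp add: dd_def EE_def)

lemma achieve:
  assumes "Pc p q m ((dd p q j - dd p q i) / 2 ^ Suc m) \<noteq> 0" "q > 0"
  shows "\<exists>K M :: int. \<bar>K\<bar> < 2 ^ m \<and> \<bar>M\<bar> < 2 ^ m \<and> 2 * (int q * K + int p * M) = EE p q j - EE p q i"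
proof -
  have "{(a,b). a \<in> W p q m \<and> b \<in> W p q m \<and> dyadic_sum a - dyadic_sum b = (dd p q j - dd p q i) / 2 ^ Suc m} \<noteq> {}"
    using assms(1) unfolding Pc_def by (intro notI) (simp only: card.empty)
  then obtain a b where ab: "a \<in> W p q m" "b \<in> W p q m"
    "dyadic_sum a - dyadic_sum b = (dd p q j - dd p q i) / 2 ^ Suc m" by blast
  obtain U V :: nat where UV: "U < 2 ^ m" "V < 2 ^ m" "real q * 2 ^ m * dyadic_sum a = real q * real U + real p * real V"
    using decomp[of a p q] ab(1) assms(2) by (auto simp: W_def)
  obtain U' V' :: nat where UV': "U' < 2 ^ m" "V' < 2 ^ m" "real q * 2 ^ m * dyadic_sum b = real q * real U' + real p * real V'"
    using decomp[of b p q] ab(2) assms(2) by (auto simp: W_def)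
  have "2 * (real q * 2 ^ m * dyadic_sum a - real q * 2 ^ m * dyadic_sum b) = real q * dd p q j - real q * dd p q i"
  proof -
    have "2 * 2 ^ m * (dyadic_sum a - dyadic_sum b) = dd p q j - dd p q i" using ab(3) by (simp add: field_simps)
    hence "real q * (2 * 2 ^ m * (dyadic_sum a - dyadic_sum b)) = real q * (dd p q j - dd p q i)" by simp
    thus ?thesis by (simp add: algebra_simps)
  qed
  hence "2 * ((real q * real U + real p * real V) - (real q * real U' + real p * real V')) = real_of_int (EE p q j - EE p q i)"
    using UV UV' qdd[OF assms(2)] by simp
  hence "real_of_int (2 * (int q * (int U - int U') + int p * (int V - int V'))) = real_of_int (EE p q j - EE p q i)"
    by (simp add: algebra_simps)
  hence e: "2 * (int q * (int U - int U') + int p * (int V - int V')) = EE p q j - EE p q i"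
    by (simp only: of_int_eq_iff)
  have c: "int x < 2 ^ m" if "x < 2 ^ m" for x :: nat
  proof -
    have "int x < int (2 ^ m)" using that by (simp only: of_nat_less_iff)
    thus ?thesis by simp
  qed
  have b1: "\<bar>int U - int U'\<bar> < 2 ^ m" using c[OF UV(1)] c[OF UV'(1)] by linarith
  have b2: "\<bar>int V - int V'\<bar> < 2 ^ m" using c[OF UV(2)] c[OF UV'(2)] by linarith
  show ?thesis using e b1 b2 by blast
qed



lemma int_bound: "int q < 2 * 2 ^ m \<Longrightarrow> q < 2 ^ Suc m"
proof -
  assume "int q < 2 * 2 ^ m"
  hence "int q < int (2 ^ Suc m)" by simp
  thus ?thesis by (simp only: of_nat_less_iff)
qed

lemma int_bound2: "2 * 2 ^ m \<le> 2 * int q \<longleftrightarrow> 2 ^ Suc m \<le> 2 * q"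
proof -
  have "(2 * 2 ^ m \<le> 2 * int q) = (int (2 ^ Suc m) \<le> int (2 * q))" by simp
  thus ?thesis by (simp only: of_nat_le_iff)
qed

lemma pairA:
  assumes "coprime p q" "q > 0" "Pc p q m ((dd p q j - dd p q i) / 2 ^ Suc m) \<noteq> 0"
    and ij: "(i = 0 \<and> j = 1) \<or> (i = 1 \<and> j = 0)"
  shows "q < 2 ^ Suc m \<and> (2 ^ Suc m \<le> 2 * q \<longrightarrow> even q)"
proof -
  obtain K M :: int where KM: "\<bar>K\<bar> < 2 ^ m" "\<bar>M\<bar> < 2 ^ m" "2 * (int q * K + int p * M) = EE p q j - EE p q i"
    using achieve[OF assms(3) assms(2)] by blast
  have "EE p q j - EE p q i = 1 * int q \<or> EE p q j - EE p q i = (-1) * int q"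
    using ij by (auto simp: EE_def)
  then obtain s :: int where s: "s = 1 \<or> s = -1" "EE p q j - EE p q i = s * int q"
    by blast
  have "int q < 2 * 2 ^ m \<and> (2 * 2 ^ m \<le> 2 * int q \<longrightarrow> even (int q))"
    by (rule caseA[OF _ _ KM(1,2) _ s(1)]) (use assms KM s in auto)
  thus ?thesis using int_bound int_bound2 by auto
qed

lemma pairB:
  assumes "coprime p q" "q > 0" "Pc p q m ((dd p q j - dd p q i) / 2 ^ Suc m) \<noteq> 0"
    and ij: "(i = 0 \<and> j = 2) \<or> (i = 2 \<and> j = 0)"
  shows "q < 2 ^ Suc m \<and> (2 ^ Suc m \<le> 2 * q \<longrightarrow> odd q \<and> even p)"
proof -
  obtain K M :: int where KM: "\<bar>K\<bar> < 2 ^ m" "\<bar>M\<bar> < 2 ^ m" "2 * (int q * K + int p * M) = EE p q j - EE p q i"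
    using achieve[OF assms(3) assms(2)] by blast
  have "EE p q j - EE p q i = 1 * int p \<or> EE p q j - EE p q i = (-1) * int p"
    using ij by (auto simp: EE_def)
  then obtain s :: int where s: "s = 1 \<or> s = -1" "EE p q j - EE p q i = s * int p"
    by blast
  have "int q < 2 * 2 ^ m \<and> (2 * 2 ^ m \<le> 2 * int q \<longrightarrow> odd (int q) \<and> even (int p))"
    by (rule caseB[OF _ _ KM(1,2) _ s(1)]) (use assms KM s in auto)
  thus ?thesis using int_bound int_bound2 by auto
qed

lemma pairC:
  assumes "coprime p q" "q > 0" "Pc p q m ((dd p q j - dd p q i) / 2 ^ Suc m) \<noteq> 0"
    and ij: "(i = 1 \<and> j = 2) \<or> (i = 2 \<and> j = 1)"
  shows "q < 2 ^ Suc m \<and> (2 ^ Suc m \<le> 2 * q \<longrightarrow> odd q \<and> odd p)"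
proof -
  obtain K M :: int where KM: "\<bar>K\<bar> < 2 ^ m" "\<bar>M\<bar> < 2 ^ m" "2 * (int q * K + int p * M) = EE p q j - EE p q i"
    using achieve[OF assms(3) assms(2)] by blast
  have "EE p q j - EE p q i = 1 * (int q - int p) \<or> EE p q j - EE p q i = (-1) * (int q - int p)"
    using ij by (auto simp: EE_def)
  then obtain s :: int where s: "s = 1 \<or> s = -1" "EE p q j - EE p q i = s * (int q - int p)"
    by blast
  have "int q < 2 * 2 ^ m \<and> (2 * 2 ^ m \<le> 2 * int q \<longrightarrow> odd (int q) \<and> odd (int p))"
    by (rule caseC[OF _ _ KM(1,2) _ s(1)]) (use assms KM s in auto)
  thus ?thesis using int_bound int_bound2 by auto
qed

lemma sum3: "(\<Sum>i<3. f i) = f 0 + f 1 + (f 2 :: nat)" for f :: "nat \<Rightarrow> nat"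
  by (simp add: eval_nat_numeral)

lemma step_bound:
  assumes cop: "coprime p q" and q: "q > 0"
  shows "countN p q (Suc m) \<le> 9 * countN p q m"
    and "2 ^ Suc m \<le> q \<Longrightarrow> countN p q (Suc m) \<le> 3 * countN p q m"
    and "2 ^ Suc m \<le> 2 * q \<Longrightarrow> countN p q (Suc m) \<le> 5 * countN p q m"
proof -
  define g where "g i j = Pc p q m ((dd p q j - dd p q i) / 2 ^ Suc m)" for i j
  define N where "N = countN p q m"
  have gd: "g i i = N" for i by (simp add: g_def N_def countN_Pc)
  have gle: "g i j \<le> N" for i j by (simp add: g_def N_def countN_Pc Pc_le)
  have "countN p q (Suc m) = (\<Sum>x\<in>dd p q ` {..<3}. \<Sum>y\<in>dd p q ` {..<3}. Pc p q m ((y - x) / 2 ^ Suc m))"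
    by (simp add: countN_step D_img)
  also have "\<dots> \<le> (\<Sum>i<3. \<Sum>y\<in>dd p q ` {..<3}. Pc p q m ((y - dd p q i) / 2 ^ Suc m))"
    using sum_image_le[of "{..<3}" "\<lambda>x. \<Sum>y\<in>dd p q ` {..<3}. Pc p q m ((y - x) / 2 ^ Suc m)" "dd p q"]
    by (simp add: o_def)
  also have "\<dots> \<le> (\<Sum>i<3. \<Sum>j<3. g i j)"
  proof (rule sum_mono)
    fix i assume "i \<in> {..<3::nat}"
    show "(\<Sum>y\<in>dd p q ` {..<3}. Pc p q m ((y - dd p q i) / 2 ^ Suc m)) \<le> (\<Sum>j<3. g i j)"
      using sum_image_le[of "{..<3}" "\<lambda>y. Pc p q m ((y - dd p q i) / 2 ^ Suc m)" "dd p q"]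
      by (simp add: o_def g_def)
  qed
  also have "\<dots> = g 0 0 + g 0 1 + g 0 2 + g 1 0 + g 1 1 + g 1 2 + g 2 0 + g 2 1 + g 2 2"
    by (simp add: sum3)
  finally have tot: "countN p q (Suc m) \<le> 3 * N + (g 0 1 + g 1 0) + (g 0 2 + g 2 0) + (g 1 2 + g 2 1)"
    using gd by simp
  have A: "g i j = 0 \<or> (q < 2 ^ Suc m \<and> (2 ^ Suc m \<le> 2 * q \<longrightarrow> even q))" if "(i = 0 \<and> j = 1) \<or> (i = 1 \<and> j = 0)" for i j
    using pairA[OF cop q _ that] unfolding g_def by blast
  have B: "g i j = 0 \<or> (q < 2 ^ Suc m \<and> (2 ^ Suc m \<le> 2 * q \<longrightarrow> odd q \<and> even p))" if "(i = 0 \<and> j = 2) \<or> (i = 2 \<and> j = 0)" for i j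
    using pairB[OF cop q _ that] unfolding g_def by blast
  have C: "g i j = 0 \<or> (q < 2 ^ Suc m \<and> (2 ^ Suc m \<le> 2 * q \<longrightarrow> odd q \<and> odd p))" if "(i = 1 \<and> j = 2) \<or> (i = 2 \<and> j = 1)" for i j
    using pairC[OF cop q _ that] unfolding g_def by blast
  show "countN p q (Suc m) \<le> 9 * countN p q m"
    using tot gle[of 0 1] gle[of 1 0] gle[of 0 2] gle[of 2 0] gle[of 1 2] gle[of 2 1] by (simp add: N_def)
  show "countN p q (Suc m) \<le> 3 * countN p q m" if "2 ^ Suc m \<le> q"
    using tot that A[of 0 1] A[of 1 0] B[of 0 2] B[of 2 0] C[of 1 2] C[of 2 1] by (simp add: N_def)
  show "countN p q (Suc m) \<le> 5 * countN p q m" if h: "2 ^ Suc m \<le> 2 * q"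
  proof (cases "even q")
    case True
    thus ?thesis using tot h gle[of 0 1] gle[of 1 0] B[of 0 2] B[of 2 0] C[of 1 2] C[of 2 1] by (simp add: N_def)
  next
    case False
    show ?thesis
    proof (cases "even p")
      case True
      thus ?thesis using False tot h A[of 0 1] A[of 1 0] gle[of 0 2] gle[of 2 0] C[of 1 2] C[of 2 1] by (simp add: N_def)
    next
      case False2: False
      thus ?thesis using False tot h A[of 0 1] A[of 1 0] B[of 0 2] B[of 2 0] gle[of 1 2] gle[of 2 1] by (simp add: N_def)
    qed
  qed
qed



fun bin :: "nat \<Rightarrow> nat \<Rightarrow> nat list" where
  "bin 0 m = []"
| "bin (Suc n) m = (m div 2 ^ n) # bin n (m mod 2 ^ n)"

lemma bin_props:
  "m < 2 ^ n \<Longrightarrow> length (bin n m) = n \<and> set (bin n m) \<subseteq> {0,1} \<and>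
     (\<Sum>i<n. real (bin n m ! i) / 2 ^ (i + 1)) = real m / 2 ^ n"
proof (induction n arbitrary: m)
  case 0 thus ?case by simp
next
  case (Suc n)
  define d where "d = m div 2 ^ n"
  define r where "r = m mod 2 ^ n"
  have r: "r < 2 ^ n" by (simp add: r_def)
  have md: "m = d * 2 ^ n + r" unfolding d_def r_def by (rule div_mult_mod_eq[symmetric])
  have d: "d < 2" unfolding d_def by (rule less_mult_imp_div_less) (use Suc.prems in simp)
  have IH: "length (bin n r) = n \<and> set (bin n r) \<subseteq> {0,1} \<and>
     (\<Sum>i<n. real (bin n r ! i) / 2 ^ (i + 1)) = real r / 2 ^ n" using Suc.IH[OF r] .
  have b: "bin (Suc n) m = d # bin n r" by (simp add: d_def r_def)
  have "(\<Sum>i<Suc n. real (bin (Suc n) m ! i) / 2 ^ (i + 1))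
        = real d / 2 + (\<Sum>i<n. real (bin n r ! i) / 2 ^ (i + 1)) / 2"
    unfolding b sum.lessThan_Suc_shift by (simp add: sum_divide_distrib del: sum.lessThan_Suc)
  also have "\<dots> = real m / 2 ^ Suc n"
  proof -
    have rm: "real m = real d * 2 ^ n + real r" using md by (simp only: of_nat_add of_nat_mult of_nat_power of_nat_numeral)
    have "(\<Sum>i<n. real (bin n r ! i) / 2 ^ (i + 1)) = real r / 2 ^ n" using IH by blast
    thus ?thesis unfolding rm by (simp add: field_simps)
  qed
  finally have S: "(\<Sum>i<Suc n. real (bin (Suc n) m ! i) / 2 ^ (i + 1)) = real m / 2 ^ Suc n" .
  have "d \<in> {0,1}" using d by auto
  thus ?case using IH S b by simp
qed

definition zw :: "nat \<Rightarrow> nat \<Rightarrow> nat \<Rightarrow> nat \<Rightarrow> (nat \<times> nat) list" where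
  "zw p q n t = zip (bin n (t * q)) (bin n (t * p))"

definition fsum :: "nat \<Rightarrow> (nat \<times> nat) list \<Rightarrow> real" where
  "fsum n z = (\<Sum>i<n. real (fst (z ! i)) / 2 ^ (i + 1))"

lemma zw_props:
  assumes "t * q < 2 ^ n" "p \<le> q"
  shows "zw p q n t \<in> Zset p q n \<and> fsum n (zw p q n t) = real (t * q) / 2 ^ n"
proof -
  have tp: "t * p < 2 ^ n" using assms by (meson le_less_trans mult_le_mono2)
  note A = bin_props[OF assms(1)] and B = bin_props[OF tp]
  have len: "length (zw p q n t) = n" using A B by (simp add: zw_def)
  have set: "set (zw p q n t) \<subseteq> alphB"
  proof
    fix z assume "z \<in> set (zw p q n t)"
    then obtain a b where ab: "z = (a,b)" "(a,b) \<in> set (zip (bin n (t * q)) (bin n (t * p)))"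
      unfolding zw_def by (metis surj_pair)
    hence "fst z \<in> set (bin n (t * q))" "snd z \<in> set (bin n (t * p))"
      using set_zip_leftD[OF ab(2)] set_zip_rightD[OF ab(2)] by auto
    hence "fst z \<in> {0,1}" "snd z \<in> {0,1}" using A B by auto
    thus "z \<in> alphB" by (cases z) (auto simp: alphB_def)
  qed
  have s1: "(\<Sum>i<n. real (fst (zw p q n t ! i)) / 2 ^ (i + 1)) = real (t * q) / 2 ^ n"
    using A B by (simp add: zw_def)
  have s2: "(\<Sum>i<n. real (snd (zw p q n t ! i)) / 2 ^ (i + 1)) = real (t * p) / 2 ^ n"
    using A B by (simp add: zw_def)
  have "real p * (real (t * q) / 2 ^ n) - real q * (real (t * p) / 2 ^ n) = 0" by (simp add: field_simps)
  thus ?thesis using len set s1 s2 by (simp add: Zset_def fsum_def)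
qed

lemma z0_props: "replicate n (0,0) \<in> Zset p q n \<and> fsum n (replicate n (0,0)) = 0"
  by (auto simp: Zset_def fsum_def alphB_def)

lemma finite_Zset: "finite (Zset p q n)"
proof -
  have "Zset p q n \<subseteq> {xs. set xs \<subseteq> alphB \<and> length xs = n}" by (auto simp: Zset_def)
  moreover have "finite alphB" by (simp add: alphB_def)
  ultimately show ?thesis using finite_lists_length_eq finite_subset by blast
qed

definition GG :: "(nat \<times> nat) list \<Rightarrow> ereal" where
  "GG x = (SUP y\<in>cyl x. phi y)"

lemma GG_ge2: assumes "x \<in> Zset p q n" shows "ereal (ln 2) \<le> GG x"
proof -
  define y where "y k = (if k < length x then x ! k else (0,0))" for k
  have sx: "set x \<subseteq> alphB" using assms by (simp add: Zset_def)
  have yk: "\<forall>k. y k \<in> alphB"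
  proof
    fix k show "y k \<in> alphB"
    proof (cases "k < length x")
      case True thus ?thesis using sx nth_mem[OF True] by (auto simp: y_def)
    qed (simp add: y_def alphB_def)
  qed
  have "y \<in> cyl x" using yk by (simp add: cyl_def y_def)
  hence "phi y \<le> GG x" unfolding GG_def by (rule SUP_upper)
  thus ?thesis using phi_ge2[OF yk] by simp
qed

lemma GG_z0: "ereal (ln 3) \<le> GG (replicate n (0,0))"
proof -
  have "(\<lambda>_. (0::nat,0::nat)) \<in> cyl (replicate n (0,0))" by (simp add: cyl_def alphB_def)
  hence "phi (\<lambda>_. (0,0)) \<le> GG (replicate n (0,0))" unfolding GG_def by (rule SUP_upper)
  thus ?thesis using phi_zero by simp
qed

lemma sum_sub:
  assumes "A \<subseteq> Zset p q n"
  shows "(\<Sum>x\<in>A. GG x) \<le> (\<Sum>x\<in>Zset p q n. GG x)"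
proof (rule sum_mono2[OF finite_Zset assms])
  fix x assume "x \<in> Zset p q n - A"
  hence "ereal (ln 2) \<le> GG x" using GG_ge2 by blast
  moreover have "0 \<le> ereal (ln 2)" by simp
  ultimately show "0 \<le> GG x" by (rule order_trans[rotated])
qed



lemma ratio_ln:
  assumes "real N1 \<le> c * real N0" "c \<ge> 1"
  shows "ln (real N1 / real N0) \<le> ln c"
proof (cases "real N1 / real N0 = 0")
  case True
  hence "ln (real N1 / real N0) = ln 0" by (simp only:)
  hence "ln (real N1 / real N0) = 0" by simp
  thus ?thesis using assms(2) by simp
next
  case False
  hence pos: "real N1 / real N0 > 0" "N0 > 0" by (auto simp: divide_pos_pos)
  hence "real N1 / real N0 \<le> c" using assms by (simp add: divide_le_eq mult.commute)
  thus ?thesis using pos by simp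
qed

theorem theorem7p6:
  fixes p q n :: nat
  assumes "coprime p q" and "q > 0" and "p \<le> q" and "n \<ge> 2"
  shows "ereal (ln (real (countN p q n) / real (countN p q (n - 1))))
           \<le> (\<Sum>x\<in>Zset p q n. (SUP y\<in>cyl x. phi y))"
proof -
  obtain m where n: "n = Suc m" using assms(4) by (cases n) auto
  define z0 where "z0 = replicate n (0::nat,0::nat)"
  have z0: "z0 \<in> Zset p q n" "fsum n z0 = 0" using z0_props unfolding z0_def by auto
  have hq: "real q / 2 ^ n > 0" using assms(2) by simp
  have "\<exists>c A. real (countN p q n) \<le> c * real (countN p q (n - 1)) \<and> c \<ge> 1 \<and> A \<subseteq> Zset p q n \<and>
              ereal (ln c) \<le> (\<Sum>x\<in>A. GG x)"
  proof (cases "2 ^ n \<le> q")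
    case True
    hence "countN p q n \<le> 3 * countN p q (n - 1)" using step_bound(2)[OF assms(1,2)] n by simp
    hence "real (countN p q n) \<le> 3 * real (countN p q (n - 1))" by linarith
    thus ?thesis using z0 GG_z0[of n] unfolding z0_def by (intro exI[of _ 3] exI[of _ "{replicate n (0,0)}"]) auto
  next
    case False
    define z1 where "z1 = zw p q n 1"
    have z1: "z1 \<in> Zset p q n" "fsum n z1 = real q / 2 ^ n" using zw_props[of 1 q n p] False assms(3)
      unfolding z1_def by auto
    have z01: "z0 \<noteq> z1" using z0 z1 hq by auto
    have g01: "ereal (ln 3 + ln 2) \<le> GG z0 + GG z1"
      using add_mono[OF GG_z0[of n] GG_ge2[OF z1(1)]] unfolding z0_def by simp
    show ?thesis
    proof (cases "2 ^ n \<le> 2 * q")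
      case True
      hence "countN p q n \<le> 5 * countN p q (n - 1)" using step_bound(3)[OF assms(1,2)] n by simp
      hence c: "real (countN p q n) \<le> 5 * real (countN p q (n - 1))" by linarith
      have "ln (5::real) \<le> ln 6" by simp
      also have "ln (6::real) = ln (3 * 2)" by simp
      also have "\<dots> = ln 3 + ln 2" by (rule ln_mult_pos) simp_all
      finally have l: "ln (5::real) \<le> ln 3 + ln 2" .
      have "ereal (ln 5) \<le> (\<Sum>x\<in>{z0, z1}. GG x)" using g01 z01 l
        by (simp add: order_trans[OF _ g01])
      thus ?thesis using c z0 z1 by (intro exI[of _ 5] exI[of _ "{z0, z1}"]) auto
    next
      case False2: False
      define z2 where "z2 = zw p q n 2"
      have z2: "z2 \<in> Zset p q n" "fsum n z2 = real (2 * q) / 2 ^ n" using zw_props[of 2 q n p] False2 assms(3)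
        unfolding z2_def by auto
      have z02: "z0 \<noteq> z2" "z1 \<noteq> z2" using z0 z1 z2 hq by (auto simp: field_simps)
      have "countN p q n \<le> 9 * countN p q (n - 1)" using step_bound(1)[OF assms(1,2)] n by simp
      hence c: "real (countN p q n) \<le> 9 * real (countN p q (n - 1))" by linarith
      have g: "ereal (ln 3 + ln 2 + ln 2) \<le> GG z0 + GG z1 + GG z2"
        using add_mono[OF g01 GG_ge2[OF z2(1)]] by simp
      have "ln (9::real) \<le> ln 12" by simp
      also have "ln (12::real) = ln (3 * 2 * 2)" by simp
      also have "\<dots> = ln (3 * 2) + ln 2" by (rule ln_mult_pos) simp_all
      also have "ln (3 * 2::real) = ln 3 + ln 2" by (rule ln_mult_pos) simp_all
      finally have l: "ln (9::real) \<le> ln 3 + ln 2 + ln 2" .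
      have "(\<Sum>x\<in>{z0, z1, z2}. GG x) = GG z0 + GG z1 + GG z2" using z01 z02 by (simp add: add.assoc)
      hence "ereal (ln 9) \<le> (\<Sum>x\<in>{z0, z1, z2}. GG x)" using g l
        by (metis ereal_less_eq(3) order_trans)
      thus ?thesis using c z0 z1 z2 by (intro exI[of _ 9] exI[of _ "{z0, z1, z2}"]) auto
    qed
  qed
  then obtain c A where cA: "real (countN p q n) \<le> c * real (countN p q (n - 1))" "c \<ge> 1"
    "A \<subseteq> Zset p q n" "ereal (ln c) \<le> (\<Sum>x\<in>A. GG x)" by blast
  have "ereal (ln (real (countN p q n) / real (countN p q (n - 1)))) \<le> ereal (ln c)"
    using ratio_ln[OF cA(1,2)] by simp
  also have "\<dots> \<le> (\<Sum>x\<in>A. GG x)" by (rule cA(4))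
  also have "\<dots> \<le> (\<Sum>x\<in>Zset p q n. GG x)" by (rule sum_sub[OF cA(3)])
  finally show ?thesis unfolding GG_def .
qed

end
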